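(* Let $w=w_1\cdots w_n$ be a word of length $n\ge 2$ such that each letter occurs at most $n/4$ times in $w$. Then $f(w)=n+2$. Moreover, for infinitely many $n\ge 2$ there exists a word $w$ of length $n$ in which every letter occurs at most $1+n/4$ times and such that $f(w)>n+2$.
   Context: A word of length $n$ is a sequence $w=w_1w_2\cdots w_n$ of letters (symbols). Let $[n]=\{1,\dots,n\}$. An $n$-grid is a function $G:[n]^2\to\Sigma$, where $\Sigma$ is an arbitrary set of letters. The $i$th row of $G$ contains $w$ if $G(i,j)=w_j$ for all $1\le j\le n$, or $G(i,j)=w_{n-j+1}$ for all $1\le j\le n$. The $j$th column contains $w$ if $G(i,j)=w_i$ for all $i$, or $G(i,j)=w_{n-i+1}$ for all $i$. The main diagonal contains $w$ if $G(i,i)=w_i$ for all $i$ or $G(i,i)=w_{n-i+1}$ for all $i$; the anti-diagonal contains $w$ if $G(i,n-i+1)=w_i$ for all $i$ or $G(i,n-i+1)=w_{n-i+1}$ for all $i$. Let $f(w,G)$ be the number of the $2n+2$ lines ($n$ rows, $n$ columns, $2$ diagonals) of $G$ that contain $w$, and $f(w)=\max_G f(w,G)$ over all $n$-grids $G$. *)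

theory Defs
  imports Main
begin

text \<open>A word of length n is a list w; letter w_k (1-based) is w ! (k - 1).
  An n-grid is G :: nat \<Rightarrow> nat \<Rightarrow> 'a, of which only the values on {1..n} x {1..n} matter.\<close>

definition row_contains :: "'a list \<Rightarrow> (nat \<Rightarrow> nat \<Rightarrow> 'a) \<Rightarrow> nat \<Rightarrow> bool" where
  "row_contains w G i \<longleftrightarrow>
     (\<forall>j\<in>{1..length w}. G i j = w ! (j - 1)) \<or>
     (\<forall>j\<in>{1..length w}. G i j = w ! (length w - j))"

definition col_contains :: "'a list \<Rightarrow> (nat \<Rightarrow> nat \<Rightarrow> 'a) \<Rightarrow> nat \<Rightarrow> bool" where
  "col_contains w G j \<longleftrightarrow>
     (\<forall>i\<in>{1..length w}. G i j = w ! (i - 1)) \<or>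
     (\<forall>i\<in>{1..length w}. G i j = w ! (length w - i))"

definition diag_contains :: "'a list \<Rightarrow> (nat \<Rightarrow> nat \<Rightarrow> 'a) \<Rightarrow> bool" where
  "diag_contains w G \<longleftrightarrow>
     (\<forall>i\<in>{1..length w}. G i i = w ! (i - 1)) \<or>
     (\<forall>i\<in>{1..length w}. G i i = w ! (length w - i))"

definition anti_contains :: "'a list \<Rightarrow> (nat \<Rightarrow> nat \<Rightarrow> 'a) \<Rightarrow> bool" where
  "anti_contains w G \<longleftrightarrow>
     (\<forall>i\<in>{1..length w}. G i (length w - i + 1) = w ! (i - 1)) \<or>
     (\<forall>i\<in>{1..length w}. G i (length w - i + 1) = w ! (length w - i))"

definition lines_count :: "'a list \<Rightarrow> (nat \<Rightarrow> nat \<Rightarrow> 'a) \<Rightarrow> nat" where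
  "lines_count w G =
     card {i \<in> {1..length w}. row_contains w G i}
   + card {j \<in> {1..length w}. col_contains w G j}
   + (if diag_contains w G then 1 else 0)
   + (if anti_contains w G then 1 else 0)"

text \<open>f(w) = max over all grids (the values are bounded by 2n+2, so the Max exists).\<close>
definition fmax :: "'a list \<Rightarrow> nat" where
  "fmax w = Max (range (lines_count w))"

end

theory Submission
  imports Defs
begin

lemma count_card: "count_list w x = card {p. p < length w \<and> w ! p = x}"
  by (simp add: count_list_eq_length_filter length_filter_conv_card eq_commute)

lemma lc_bound: "lines_count w G \<le> 2 * length w + 2"
proof -
  have "card {i \<in> {1..length w}. row_contains w G i} \<le> card {1..length w}"
    by (rule card_mono) auto
  moreover have "card {i \<in> {1..length w}. col_contains w G i} \<le> card {1..length w}"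
    by (rule card_mono) auto
  ultimately show ?thesis unfolding lines_count_def by simp
qed

lemma fin_range: "finite (range (lines_count w))"
proof (rule finite_subset[of _ "{..2 * length w + 2}"])
  show "range (lines_count w) \<subseteq> {..2 * length w + 2}"
  proof
    fix x assume "x \<in> range (lines_count w)"
    then obtain G where "x = lines_count w G" by blast
    then show "x \<in> {..2 * length w + 2}" using lc_bound[of w G] by simp
  qed
qed simp

lemma fmax_ge: "lines_count w G \<le> fmax w"
  unfolding fmax_def by (rule Max_ge[OF fin_range]) auto

lemma sigma_card:
  assumes inj: "inj_on \<sigma> {1..n}" and into: "\<And>i. i \<in> {1..n} \<Longrightarrow> \<sigma> i < n"
    and n: "n = length w"
  shows "card {i \<in> {1..n}. w ! (\<sigma> i) = x \<or> w ! (\<sigma> i) = y}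
         \<le> count_list w x + count_list w y"
proof -
  have "card {i \<in> {1..n}. w ! (\<sigma> i) = x \<or> w ! (\<sigma> i) = y}
        \<le> card {p. p < n \<and> (w ! p = x \<or> w ! p = y)}"
    apply (rule card_inj_on_le[where f = \<sigma>])
    using inj into by (auto intro: inj_on_subset)
  also have "\<dots> \<le> card ({p. p < n \<and> w ! p = x} \<union> {p. p < n \<and> w ! p = y})"
    by (rule card_mono) auto
  also have "\<dots> \<le> card {p. p < n \<and> w ! p = x} + card {p. p < n \<and> w ! p = y}"
    by (rule card_Un_le)
  finally show ?thesis using n by (simp add: count_card)
qed

lemma two_sigma:
  assumes "n = length w" and "\<forall>a. 4 * count_list w a \<le> n"
  and "\<sigma> = (\<lambda>i. i - 1) \<or> \<sigma> = (\<lambda>i. n - i)"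
  shows "2 * card {i \<in> {1..n}. w ! (\<sigma> i) = x \<or> w ! (\<sigma> i) = y} \<le> n"
proof -
  have "inj_on \<sigma> {1..n} \<and> (\<forall>i\<in>{1..n}. \<sigma> i < n)"
  proof (cases "\<sigma> = (\<lambda>i. i - 1)")
    case True
    then show ?thesis by (auto simp add: inj_on_def)
  next
    case False
    then have "\<sigma> = (\<lambda>i. n - i)" using assms(3) by blast
    then show ?thesis by (auto simp add: inj_on_def)
  qed
  then have "card {i \<in> {1..n}. w ! (\<sigma> i) = x \<or> w ! (\<sigma> i) = y}
         \<le> count_list w x + count_list w y" using sigma_card[OF _ _ assms(1)] by blast
  moreover have "4 * count_list w x \<le> n" "4 * count_list w y \<le> n" using assms(2) by auto
  ultimately show ?thesis by linarith
qed

lemma upper: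
  assumes n: "n = length w" and cnt: "\<forall>a. 4 * count_list w a \<le> n"
  shows "lines_count w G \<le> n + 2"
proof -
  define R where "R = {i \<in> {1..n}. row_contains w G i}"
  define C where "C = {i \<in> {1..n}. col_contains w G i}"
  have "card R \<le> card {1..n}" unfolding R_def by (rule card_mono) auto
  then have cR: "card R \<le> n" by simp
  have "card C \<le> card {1..n}" unfolding C_def by (rule card_mono) auto
  then have cC: "card C \<le> n" by simp
  have "card R + card C \<le> n"
  proof (cases "R = {} \<or> C = {}")
    case True then show ?thesis using cR cC by auto
  next
    case False
    then obtain i j where i: "i \<in> R" and j: "j \<in> C" by auto
    have i1: "i \<in> {1..n}" and ri: "row_contains w G i" using i R_def by auto
    have j1: "j \<in> {1..n}" and cj: "col_contains w G j" using j C_def by auto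
    have "(\<forall>i\<in>{1..n}. G i j = w ! (i - 1)) \<or> (\<forall>i\<in>{1..n}. G i j = w ! (n - i))"
      using cj n unfolding col_contains_def by simp
    then have "\<exists>\<sigma>. (\<sigma> = (\<lambda>i. i - 1) \<or> \<sigma> = (\<lambda>i. n - i)) \<and> (\<forall>i\<in>{1..n}. G i j = w ! (\<sigma> i))"
      apply (elim disjE)
       apply (rule exI[where x="\<lambda>i. i - 1"]; simp)
      apply (rule exI[where x="\<lambda>i. n - i"]; simp)
      done
    then obtain \<sigma> where s: "\<sigma> = (\<lambda>i. i - 1) \<or> \<sigma> = (\<lambda>i. n - i)"
      and sc: "\<forall>i\<in>{1..n}. G i j = w ! (\<sigma> i)" by blast
    have "(\<forall>j\<in>{1..n}. G i j = w ! (j - 1)) \<or> (\<forall>j\<in>{1..n}. G i j = w ! (n - j))"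
      using ri n unfolding row_contains_def by simp
    then have "\<exists>\<tau>. (\<tau> = (\<lambda>i. i - 1) \<or> \<tau> = (\<lambda>i. n - i)) \<and> (\<forall>j\<in>{1..n}. G i j = w ! (\<tau> j))"
      apply (elim disjE)
       apply (rule exI[where x="\<lambda>i. i - 1"]; simp)
      apply (rule exI[where x="\<lambda>i. n - i"]; simp)
      done
    then obtain \<tau> where t: "\<tau> = (\<lambda>i. i - 1) \<or> \<tau> = (\<lambda>i. n - i)"
      and tc: "\<forall>j\<in>{1..n}. G i j = w ! (\<tau> j)" by blast
    have "R \<subseteq> {i \<in> {1..n}. w ! (\<sigma> i) = w ! (j - 1) \<or> w ! (\<sigma> i) = w ! (n - j)}"
    proof
      fix i' assume "i' \<in> R"
      then have "i' \<in> {1..n}" "row_contains w G i'" using R_def by auto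
      moreover have "G i' j = w ! (j - 1) \<or> G i' j = w ! (n - j)"
        using \<open>row_contains w G i'\<close> j1 n unfolding row_contains_def by blast
      moreover have "G i' j = w ! (\<sigma> i')" using sc \<open>i' \<in> {1..n}\<close> by blast
      ultimately show "i' \<in> {i \<in> {1..n}. w ! (\<sigma> i) = w ! (j - 1) \<or> w ! (\<sigma> i) = w ! (n - j)}"
        by simp
    qed
    then have "card R \<le> card {i \<in> {1..n}. w ! (\<sigma> i) = w ! (j - 1) \<or> w ! (\<sigma> i) = w ! (n - j)}"
      by (intro card_mono) auto
    then have "2 * card R \<le> n"
      using two_sigma[OF n cnt s, of "w ! (j - 1)" "w ! (n - j)"] by linarith
    moreover
    have "C \<subseteq> {j \<in> {1..n}. w ! (\<tau> j) = w ! (i - 1) \<or> w ! (\<tau> j) = w ! (n - i)}"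
    proof
      fix j' assume "j' \<in> C"
      then have "j' \<in> {1..n}" "col_contains w G j'" using C_def by auto
      moreover have "G i j' = w ! (i - 1) \<or> G i j' = w ! (n - i)"
        using \<open>col_contains w G j'\<close> i1 n unfolding col_contains_def by blast
      moreover have "G i j' = w ! (\<tau> j')" using tc \<open>j' \<in> {1..n}\<close> by blast
      ultimately show "j' \<in> {j \<in> {1..n}. w ! (\<tau> j) = w ! (i - 1) \<or> w ! (\<tau> j) = w ! (n - i)}"
        by simp
    qed
    then have "card C \<le> card {j \<in> {1..n}. w ! (\<tau> j) = w ! (i - 1) \<or> w ! (\<tau> j) = w ! (n - i)}"
      by (intro card_mono) auto
    then have "2 * card C \<le> n"
      using two_sigma[OF n cnt t, of "w ! (i - 1)" "w ! (n - i)"] by linarith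
    ultimately show ?thesis by linarith
  qed
  then show ?thesis unfolding lines_count_def R_def C_def n by simp
qed

lemma part1:
  assumes "length w \<ge> 2" and cnt: "\<forall>a. 4 * count_list w a \<le> length w"
  shows "fmax w = length w + 2"
proof -
  define G where "G = (\<lambda>(i::nat) j. w ! (j - 1))"
  have rows: "{i \<in> {1..length w}. row_contains w G i} = {1..length w}"
    by (auto simp: row_contains_def G_def)
  have "diag_contains w G" by (auto simp: diag_contains_def G_def)
  moreover have "anti_contains w G"
    by (auto simp: anti_contains_def G_def intro!: disjI2 arg_cong[where f="(!) w"])
  ultimately have "lines_count w G \<ge> length w + 2"
    unfolding lines_count_def rows by simp
  moreover have "\<forall>G. lines_count w G \<le> length w + 2" using upper cnt by blast
  ultimately have "length w + 2 \<in> range (lines_count w)"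
    by (metis le_antisym rangeI)
  then show ?thesis unfolding fmax_def
    using upper[OF refl cnt] by (intro Max_eqI[OF fin_range]) auto
qed

definition LL :: "nat \<Rightarrow> nat \<Rightarrow> nat" where
  "LL k j = (if j \<le> k + 1 then 0 else if 3 * k \<le> j then 1 else j)"

definition WW :: "nat \<Rightarrow> nat list" where
  "WW k = map (\<lambda>p. LL k (p + 1)) [0..<4 * k]"

lemma WW_len: "length (WW k) = 4 * k" by (simp add: WW_def)

lemma WW_nth: "p < 4 * k \<Longrightarrow> WW k ! p = LL k (p + 1)" by (simp add: WW_def)

lemma WW_count:
  assumes k: "k \<ge> 1"
  shows "4 * count_list (WW k) a \<le> 4 + 4 * k"
proof -
  have eq: "count_list (WW k) a = card {p. p < 4 * k \<and> LL k (p + 1) = a}"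
    by (simp add: count_card WW_len WW_nth cong: conj_cong)
  consider "a = 0" | "a = 1" | "a \<ge> 2" by linarith
  then show ?thesis
  proof cases
    case 1
    have "{p. p < 4 * k \<and> LL k (p + 1) = a} \<subseteq> {..k}" using 1 k by (auto simp: LL_def split: if_splits)
    then have "card {p. p < 4 * k \<and> LL k (p + 1) = a} \<le> card {..k}"
      by (rule card_mono[rotated]) simp
    then have "card {p. p < 4 * k \<and> LL k (p + 1) = a} \<le> k + 1" by simp
    then show ?thesis using eq by linarith
  next
    case 2
    have "{p. p < 4 * k \<and> LL k (p + 1) = a} \<subseteq> {3 * k - 1..<4 * k}" using 2 k by (auto simp: LL_def split: if_splits)
    then have "card {p. p < 4 * k \<and> LL k (p + 1) = a} \<le> card {3 * k - 1..<4 * k}"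
      by (rule card_mono[rotated]) simp
    then have "card {p. p < 4 * k \<and> LL k (p + 1) = a} \<le> k + 1" using k by simp
    then show ?thesis using eq by linarith
  next
    case 3
    have "{p. p < 4 * k \<and> LL k (p + 1) = a} \<subseteq> {a - 1}" using 3 k by (auto simp: LL_def split: if_splits)
    then have "card {p. p < 4 * k \<and> LL k (p + 1) = a} \<le> card {a - 1}"
      by (rule card_mono[rotated]) simp
    then have "card {p. p < 4 * k \<and> LL k (p + 1) = a} \<le> 1" by simp
    then show ?thesis using eq by linarith
  qed
qed

definition GG :: "nat \<Rightarrow> nat \<Rightarrow> nat \<Rightarrow> nat" where
  "GG k i j = (if i \<le> k + 1 then LL k j else if 3 * k \<le> i then LL k (4 * k + 1 - j)
     else if j \<le> k + 1 then LL k i else if 3 * k \<le> j then LL k (4 * k + 1 - i) else 0)"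

lemma GG_lines:
  assumes k: "k \<ge> 1"
  shows "lines_count (WW k) (GG k) \<ge> 4 * k + 4"
proof -
  let ?S = "{1..k+1} \<union> {3*k..4*k}"
  have cS: "card ?S = 2 * k + 2"
  proof -
    have "card ?S = card {1..k+1} + card {3*k..4*k}"
      using k by (intro card_Un_disjoint) auto
    then show ?thesis by simp
  qed
  have R: "?S \<subseteq> {i \<in> {1..length (WW k)}. row_contains (WW k) (GG k) i}"
  proof
    fix i assume i: "i \<in> ?S"
    show "i \<in> {i \<in> {1..length (WW k)}. row_contains (WW k) (GG k) i}"
    proof (cases "i \<le> k + 1")
      case True
      then show ?thesis using i k
        by (auto simp: row_contains_def WW_len WW_nth GG_def)
    next
      case False
      then have "3 * k \<le> i" "i \<le> 4 * k" using i by auto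
      then have "\<forall>j\<in>{1..4*k}. GG k i j = WW k ! (4 * k - j)"
        using False k by (auto simp: WW_nth GG_def Suc_diff_le)
      then show ?thesis using i k by (auto simp: row_contains_def WW_len)
    qed
  qed
  have C: "?S \<subseteq> {j \<in> {1..length (WW k)}. col_contains (WW k) (GG k) j}"
  proof
    fix j assume j: "j \<in> ?S"
    show "j \<in> {j \<in> {1..length (WW k)}. col_contains (WW k) (GG k) j}"
    proof (cases "j \<le> k + 1")
      case True
      then have "\<forall>i\<in>{1..4*k}. GG k i j = WW k ! (i - 1)"
        using j k by (auto simp: WW_nth GG_def LL_def)
      then show ?thesis using j k by (auto simp: col_contains_def WW_len)
    next
      case False
      then have "3 * k \<le> j" "j \<le> 4 * k" using j by auto
      then have "\<forall>i\<in>{1..4*k}. GG k i j = WW k ! (4 * k - i)"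
        using False k by (auto simp: WW_nth GG_def LL_def)
      then show ?thesis using j k by (auto simp: col_contains_def WW_len)
    qed
  qed
  have "card ?S \<le> card {i \<in> {1..length (WW k)}. row_contains (WW k) (GG k) i}"
    by (rule card_mono[OF _ R]) simp
  moreover have "card ?S \<le> card {j \<in> {1..length (WW k)}. col_contains (WW k) (GG k) j}"
    by (rule card_mono[OF _ C]) simp
  ultimately show ?thesis unfolding lines_count_def using cS by linarith
qed

lemma part2:
  "infinite {n :: nat. n \<ge> 2 \<and> (\<exists>w :: nat list. length w = n \<and>
            (\<forall>a. 4 * count_list w a \<le> 4 + n) \<and> fmax w > n + 2)}"
proof -
  have sub: "(\<lambda>k::nat. 4 * k) ` {1..} \<subseteq> {n :: nat. n \<ge> 2 \<and> (\<exists>w :: nat list. length w = n \<and>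
            (\<forall>a. 4 * count_list w a \<le> 4 + n) \<and> fmax w > n + 2)}"
  proof
    fix n assume "n \<in> (\<lambda>k::nat. 4 * k) ` {1..}"
    then obtain k where k: "k \<ge> 1" and n: "n = 4 * k" by auto
    have "fmax (WW k) \<ge> 4 * k + 4" using GG_lines[OF k] fmax_ge[of "WW k" "GG k"] by linarith
    then show "n \<in> {n :: nat. n \<ge> 2 \<and> (\<exists>w :: nat list. length w = n \<and>
            (\<forall>a. 4 * count_list w a \<le> 4 + n) \<and> fmax w > n + 2)}"
      using k n WW_count[OF k] WW_len[of k] by (intro CollectI conjI exI[of _ "WW k"]) auto
  qed
  have "infinite ((\<lambda>k::nat. 4 * k) ` {1..})"
  proof
    assume "finite ((\<lambda>k::nat. 4 * k) ` {1..})"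
    moreover have "inj_on (\<lambda>k::nat. 4 * k) {1..}" by (auto simp: inj_on_def)
    ultimately have "finite {1::nat..}" using finite_imageD by blast
    then show False using infinite_Ici[of "1::nat"] by simp
  qed
  then show ?thesis using sub finite_subset by blast
qed

theorem theorem1:
  shows "(\<forall>w :: 'a list. length w \<ge> 2 \<longrightarrow>
            (\<forall>a. 4 * count_list w a \<le> length w) \<longrightarrow> fmax w = length w + 2)
       \<and> infinite {n :: nat. n \<ge> 2 \<and> (\<exists>w :: nat list. length w = n \<and>
            (\<forall>a. 4 * count_list w a \<le> 4 + n) \<and> fmax w > n + 2)}"
  using part1 part2 by blast

end
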